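(* In the standard LLP setup, for every $N\ge1$: $K^\uparrow\neq\emptyset$ if and only if $L(G,\gamma^N_{cons})\subseteq\overline{K^\uparrow}$.
   Context: Standard LLP setup. $\Sigma=\Sigma_c\,\dot\cup\,\Sigma_{uc}$ is a finite alphabet partitioned into controllable and uncontrollable events. The plant $G$ has generated language $L(G)$ and marked language $L_m(G)$ with $L(G)=\overline{L_m(G)}$ ($\overline{M}$ = set of prefixes of strings in $M$). The legal language $K\subseteq L_m(G)$ satisfies $K=\overline{K}\cap L_m(G)$. For a prefix-closed $L$, $M$ is controllable w.r.t. $L$ if $\overline{M}\Sigma_{uc}\cap L\subseteq\overline{M}$; $K^\uparrow$ is the supremal sublanguage of $K$ controllable w.r.t. $L(G)$. For a language $L$ and $s\in\Sigma^*$: $L/s=\{t: st\in L\}$; $L|_N=\{t\in L:|t|\le N\}$; $\Sigma_{L(G)}(s)=\{\sigma\in\Sigma: s\sigma\in L(G)\}$. $M^{\uparrow/s|_N}$ is the supremal sublanguage of $M$ controllable w.r.t. $L(G)/s|_N$. Conservative attitude: $f^N_{cons}(s)=[K/s|_{N-1}]^{\uparrow/s|_N}$; control policy $\gamma^N_{cons}(s)=(\overline{f^N_{cons}(s)}\cap\Sigma)\cup(\Sigma_{uc}\cap\Sigma_{L(G)}(s))$. Closed-loop language $L(G,\gamma)$: $\epsilon\in L(G,\gamma)$, and $s\sigma\in L(G,\gamma)$ iff $s\in L(G,\gamma)$, $s\sigma\in L(G)$, $\sigma\in\gamma(s)$. *)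

theory Defs
  imports Main
begin

definition pre :: "'a list set \<Rightarrow> 'a list set" where
  "pre M = {s. \<exists>t. s @ t \<in> M}"

definition controllable :: "'a list set \<Rightarrow> 'a list set \<Rightarrow> 'a set \<Rightarrow> bool" where
  "controllable M L Sigma_uc \<longleftrightarrow>
     (\<forall>s \<in> pre M. \<forall>\<sigma> \<in> Sigma_uc. s @ [\<sigma>] \<in> L \<longrightarrow> s @ [\<sigma>] \<in> pre M)"

definition supcon :: "'a list set \<Rightarrow> 'a list set \<Rightarrow> 'a set \<Rightarrow> 'a list set" where
  "supcon M L Sigma_uc = \<Union> {M'. M' \<subseteq> M \<and> controllable M' L Sigma_uc}"

definition quot :: "'a list set \<Rightarrow> 'a list \<Rightarrow> 'a list set" where
  "quot L s = {t. s @ t \<in> L}"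

definition trunc :: "'a list set \<Rightarrow> nat \<Rightarrow> 'a list set" where
  "trunc L N = {t \<in> L. length t \<le> N}"

definition active :: "'a set \<Rightarrow> 'a list set \<Rightarrow> 'a list \<Rightarrow> 'a set" where
  "active Sig L s = {\<sigma> \<in> Sig. s @ [\<sigma>] \<in> L}"

definition f_cons :: "'a list set \<Rightarrow> 'a list set \<Rightarrow> 'a set \<Rightarrow> nat \<Rightarrow> 'a list \<Rightarrow> 'a list set" where
  "f_cons L K Sigma_uc N s = supcon (trunc (quot K s) (N - 1)) (trunc (quot L s) N) Sigma_uc"

text \<open>gamma^N_cons(s) = (pre(f^N_cons(s)) \<inter> Sig) \<union> (Sigma_uc \<inter> Sigma_L(s)),
  where strings of length one are identified with events.\<close>
definition gamma_cons :: "'a set \<Rightarrow> 'a list set \<Rightarrow> 'a list set \<Rightarrow> 'a set \<Rightarrow> nat \<Rightarrow> 'a list \<Rightarrow> 'a set" where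
  "gamma_cons Sig L K Sigma_uc N s =
     {\<sigma> \<in> Sig. [\<sigma>] \<in> pre (f_cons L K Sigma_uc N s)} \<union> (Sigma_uc \<inter> active Sig L s)"

inductive_set closed_loop :: "'a list set \<Rightarrow> ('a list \<Rightarrow> 'a set) \<Rightarrow> 'a list set"
  for L :: "'a list set" and \<gamma> :: "'a list \<Rightarrow> 'a set" where
  Nil: "[] \<in> closed_loop L \<gamma>"
| snoc: "s \<in> closed_loop L \<gamma> \<Longrightarrow> s @ [\<sigma>] \<in> L \<Longrightarrow> \<sigma> \<in> \<gamma> s \<Longrightarrow> s @ [\<sigma>] \<in> closed_loop L \<gamma>"

end

theory Submission
  imports Defs
begin

lemma pre_mono: "A \<subseteq> B \<Longrightarrow> pre A \<subseteq> pre B"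
  unfolding pre_def by blast

lemma supcon_sub: "supcon M L U \<subseteq> M"
  unfolding supcon_def by blast

lemma supcon_ctrl: "controllable (supcon M L U) L U"
  unfolding controllable_def supcon_def pre_def
  apply clarsimp
  by (smt (verit, ccfv_threshold) Defs.pre_def controllable_def mem_Collect_eq)

lemma supcon_max: "M' \<subseteq> M \<Longrightarrow> controllable M' L U \<Longrightarrow> M' \<subseteq> supcon M L U"
  unfolding supcon_def by blast

lemma step:
  assumes N: "N \<ge> 1"
    and s: "s \<in> pre (supcon K L U)"
    and sig: "[\<sigma>] \<in> pre (f_cons L K U N s)"
  shows "s @ [\<sigma>] \<in> pre (supcon K L U)"
proof -
  let ?C = "supcon K L U"
  from sig obtain t M' where tM: "\<sigma> # t \<in> M'" and M'sub: "M' \<subseteq> trunc (quot K s) (N - 1)"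
    and M'c: "controllable M' (trunc (quot L s) N) U"
    unfolding f_cons_def supcon_def pre_def by auto
  define D where "D = ?C \<union> (\<lambda>u. s @ u) ` M'"
  have DK: "D \<subseteq> K" unfolding D_def using supcon_sub M'sub
    by (auto simp: trunc_def quot_def)
  have Cc: "controllable ?C L U" by (rule supcon_ctrl)
  have "controllable D L U"
    unfolding controllable_def
  proof (intro ballI impI)
    fix x \<tau> assume x: "x \<in> pre D" and tau: "\<tau> \<in> U" and xl: "x @ [\<tau>] \<in> L"
    have preD: "pre ?C \<subseteq> pre D" unfolding D_def by (rule pre_mono) blast
    show "x @ [\<tau>] \<in> pre D"
    proof (cases "x \<in> pre ?C")
      case True
      then show ?thesis using Cc tau xl preD unfolding controllable_def by blast
    next
      case False
      with x obtain v m where m: "m \<in> M'" and xv: "x @ v = s @ m"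
        unfolding D_def pre_def by auto
      from xv[unfolded append_eq_append_conv2] obtain us where
        "x = s @ us \<and> us @ v = m \<or> x @ us = s \<and> v = us @ m" by blast
      then show ?thesis
      proof
        assume "x = s @ us \<and> us @ v = m"
        then have us: "x = s @ us" "us @ v = m" by auto
        have usM: "us \<in> pre M'" using us m unfolding pre_def by blast
        have "length m \<le> N - 1" using m M'sub by (auto simp: trunc_def)
        hence "length (us @ [\<tau>]) \<le> N" using us N by auto
        moreover have "us @ [\<tau>] \<in> quot L s" using xl us by (simp add: quot_def)
        ultimately have "us @ [\<tau>] \<in> trunc (quot L s) N" by (simp add: trunc_def)
        hence "us @ [\<tau>] \<in> pre M'" using M'c usM tau unfolding controllable_def by blast
        then obtain w where "us @ [\<tau>] @ w \<in> M'" unfolding pre_def by auto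
        hence "s @ (us @ [\<tau>] @ w) \<in> D" unfolding D_def by auto
        hence "(x @ [\<tau>]) @ w \<in> D" using us by simp
        thus ?thesis unfolding pre_def by blast
      next
        assume "x @ us = s \<and> v = us @ m"
        then have "x @ us = s" by blast
        moreover obtain z where "s @ z \<in> ?C" using s unfolding pre_def by blast
        ultimately have "x @ (us @ z) \<in> ?C" by (metis append.assoc)
        hence "x \<in> pre ?C" unfolding pre_def by blast
        with False show ?thesis by blast
      qed
    qed
  qed
  hence "D \<subseteq> ?C" using DK supcon_max by blast
  moreover have "s @ [\<sigma>] @ t \<in> D" using tM unfolding D_def by auto
  ultimately show ?thesis unfolding pre_def by auto
qed

theorem theorem4:
  fixes Sig Sig_c Sig_uc :: "'a set"
    and Lm L K :: "'a list set"
    and N :: nat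
  assumes "finite Sig"
    and "Sig = Sig_c \<union> Sig_uc" and "Sig_c \<inter> Sig_uc = {}"
    and "Lm \<subseteq> lists Sig"
    and "L = pre Lm"
    and "K \<subseteq> Lm" and "K = pre K \<inter> Lm"
    and "N \<ge> 1"
  shows "supcon K L Sig_uc \<noteq> {} \<longleftrightarrow>
    closed_loop L (gamma_cons Sig L K Sig_uc N) \<subseteq> pre (supcon K L Sig_uc)"
proof
  assume ne: "supcon K L Sig_uc \<noteq> {}"
  show "closed_loop L (gamma_cons Sig L K Sig_uc N) \<subseteq> pre (supcon K L Sig_uc)"
  proof
    fix x assume "x \<in> closed_loop L (gamma_cons Sig L K Sig_uc N)"
    then show "x \<in> pre (supcon K L Sig_uc)"
    proof induction
      case Nil
      then show ?case using ne unfolding pre_def by auto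
    next
      case (snoc s \<sigma>)
      from snoc.hyps(3) consider "[\<sigma>] \<in> pre (f_cons L K Sig_uc N s)"
        | "\<sigma> \<in> Sig_uc" unfolding gamma_cons_def active_def by blast
      then show ?case
      proof cases
        case 1
        then show ?thesis by (rule step[OF assms(8) snoc.IH])
      next
        case 2
        then show ?thesis using supcon_ctrl[of K L Sig_uc] snoc.IH snoc.hyps(2)
          unfolding controllable_def by blast
      qed
    qed
  qed
next
  assume "closed_loop L (gamma_cons Sig L K Sig_uc N) \<subseteq> pre (supcon K L Sig_uc)"
  hence "[] \<in> pre (supcon K L Sig_uc)" using closed_loop.Nil by blast
  thus "supcon K L Sig_uc \<noteq> {}" unfolding pre_def by auto
qed

end
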